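(* Let $Q\subset\mathbb R^n$ be an $n$-dimensional convex polyhedral cone with apex (its unique $0$-face) at the origin. Let $Q_\circ=\{x: dist(x,Q)\le1\}$, let $\nu:\mathbb R^n\to Q$ be the nearest point projection, and for each open $k$-face $F^k$ of $Q$ let $G_k=\nu^{-1}(F^k)\cap\partial Q_\circ$ (closure taken), so that $G_k$ is isometric to $F^k\times F^k_\perp$ with $F^k_\perp$ a convex spherical polytope in a unit sphere $S^{n-k-1}$. Let $R\subset\partial Q_\circ$ be the union of all $G_k$ with $k\ne n-1$, with the Riemannian metric induced from $\mathbb R^n$; $R$ is an $(n-1)$-manifold with boundary whose boundary components are the sets corresponding to the boundaries of the $(n-1)$-faces of $Q$. Then any shortest path $\gamma\subset R$ between two different boundary components $\partial_1,\partial_2$ of $R$ is a geodesic segment contained in a single $G_k$ (or in an intersection of several such sets). Consequently, $$dist_R(\partial_1,\partial_2)=dist_{S^{n-1}}(\partial_1\cap S^{n-1},\;\partial_2\cap S^{n-1}),$$ where $S^{n-1}$ is the unit sphere centred at the apex and $dist_{S^{n-1}}$ is the spherical distance.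
   Context: A convex polyhedral cone is an intersection of finitely many closed half-spaces whose boundary hyperplanes pass through the origin. $G_0=\nu^{-1}(0)\cap\partial Q_\circ=\partial Q_\circ\cap S^{n-1}$. *)

theory Defs
  imports "HOL-Analysis.Analysis"
begin

definition path_length :: "(real \<Rightarrow> 'a::euclidean_space) \<Rightarrow> ereal" where
  "path_length g = (SUP ts \<in> {ts :: real list. sorted ts \<and> set ts \<subseteq> {0..1}}.
      ereal (\<Sum>i < length ts - 1. dist (g (ts ! i)) (g (ts ! Suc i))))"

definition intrinsic_setdist :: "'a::euclidean_space set \<Rightarrow> 'a set \<Rightarrow> 'a set \<Rightarrow> ereal" where
  "intrinsic_setdist R A B = (INF g \<in> {g. path g \<and> path_image g \<subseteq> R \<and>
      pathstart g \<in> A \<and> pathfinish g \<in> B}. path_length g)"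

definition shortest_path_in :: "'a::euclidean_space set \<Rightarrow> 'a set \<Rightarrow> 'a set \<Rightarrow> (real \<Rightarrow> 'a) \<Rightarrow> bool" where
  "shortest_path_in R A B g \<longleftrightarrow> path g \<and> path_image g \<subseteq> R \<and>
      pathstart g \<in> A \<and> pathfinish g \<in> B \<and> path_length g = intrinsic_setdist R A B"

definition sphere_setdist :: "'a::euclidean_space set \<Rightarrow> 'a set \<Rightarrow> real" where
  "sphere_setdist A B = Inf {arccos (x \<bullet> y) | x y. x \<in> A \<and> y \<in> B}"

definition Qo :: "'a::euclidean_space set \<Rightarrow> 'a set" where
  "Qo Q = {x. setdist {x} Q \<le> 1}"

definition Gset :: "'a::euclidean_space set \<Rightarrow> 'a set \<Rightarrow> 'a set" where
  "Gset Q F = closure ((closest_point Q -` rel_interior F) \<inter> frontier (Qo Q))"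

definition Rset :: "'a::euclidean_space set \<Rightarrow> 'a set" where
  "Rset Q = \<Union> {Gset Q F | F. F face_of Q \<and> aff_dim F \<noteq> int DIM('a) - 1}"

text \<open>Boundary component of R corresponding to the boundary of a facet F.\<close>
definition bdry_comp :: "'a::euclidean_space set \<Rightarrow> 'a set \<Rightarrow> 'a set" where
  "bdry_comp Q F = Rset Q \<inter> Gset Q F"

end

theory Submission
  imports Defs
begin

lemma unit_inner_bounds:
  fixes u v :: "'a::euclidean_space"
  assumes "norm u = 1" "norm v = 1"
  shows "-1 \<le> u \<bullet> v" "u \<bullet> v \<le> 1"
  using Cauchy_Schwarz_ineq2[of u v] assms by auto

lemma arccos_tri:
  fixes u v w :: "'a::euclidean_space"
  assumes u: "norm u = 1" and v: "norm v = 1" and w: "norm w = 1"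
  shows "arccos (u \<bullet> w) \<le> arccos (u \<bullet> v) + arccos (v \<bullet> w)"
proof -
  define a where "a = arccos (u \<bullet> v)"
  define b where "b = arccos (v \<bullet> w)"
  note uv = unit_inner_bounds[OF u v] and vw = unit_inner_bounds[OF v w] and uw = unit_inner_bounds[OF u w]
  have ca: "cos a = u \<bullet> v" and cb: "cos b = v \<bullet> w" using uv vw a_def b_def by auto
  have sa: "sin a = sqrt (1 - (u \<bullet> v)^2)" and sb: "sin b = sqrt (1 - (v \<bullet> w)^2)"
    using uv vw a_def b_def sin_arccos by auto
  have a0: "0 \<le> a" "a \<le> pi" using a_def uv arccos_lbound arccos_ubound by auto
  have b0: "0 \<le> b" "b \<le> pi" using b_def vw arccos_lbound arccos_ubound by auto
  define u' where "u' = u - (u \<bullet> v) *\<^sub>R v"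
  define w' where "w' = w - (v \<bullet> w) *\<^sub>R v"
  have vv: "v \<bullet> v = 1" using v by (simp add: dot_square_norm)
  have uu: "u \<bullet> u = 1" using u by (simp add: dot_square_norm)
  have ww: "w \<bullet> w = 1" using w by (simp add: dot_square_norm)
  have nu': "(norm u')^2 = 1 - (u \<bullet> v)^2"
    unfolding u'_def power2_norm_eq_inner
    by (simp add: inner_diff inner_commute vv uu power2_eq_square algebra_simps)
  have nw': "(norm w')^2 = 1 - (v \<bullet> w)^2"
    unfolding w'_def power2_norm_eq_inner
    by (simp add: inner_diff inner_commute vv ww power2_eq_square algebra_simps)
  have "norm u' = sin a" using nu' sa by (simp add: real_sqrt_unique[symmetric])
  moreover have "norm w' = sin b" using nw' sb by (simp add: real_sqrt_unique[symmetric])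
  ultimately have "\<bar>u' \<bullet> w'\<bar> \<le> sin a * sin b" using Cauchy_Schwarz_ineq2[of u' w'] by simp
  moreover have "u \<bullet> w = u' \<bullet> w' + (u \<bullet> v) * (v \<bullet> w)"
    unfolding u'_def w'_def by (simp add: inner_diff inner_commute vv algebra_simps)
  ultimately have ge: "cos (a + b) \<le> u \<bullet> w" using ca cb by (simp add: cos_add)
  show ?thesis
  proof (cases "a + b \<le> pi")
    case True
    have "arccos (u \<bullet> w) \<le> arccos (cos (a+b))"
      by (rule arccos_le_arccos) (use ge uw in auto)
    also have "\<dots> = a + b" using True a0 b0 by (simp add: arccos_cos)
    finally show ?thesis using a_def b_def by simp
  next
    case False
    then show ?thesis using arccos_ubound[OF uw] a_def b_def by simp
  qed
qed

lemma sin_ge_x_cos: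
  fixes s :: real assumes "0 \<le> s" "s \<le> pi/2"
  shows "s * cos s \<le> sin s"
proof (cases "s = 0")
  case True then show ?thesis by simp
next
  case False
  then have "0 < s" using assms by simp
  obtain z where z: "0 < z" "z < s" "sin s - sin 0 = (s - 0) * cos z"
    using MVT2[OF \<open>0 < s\<close>, of sin cos] by (auto intro: DERIV_sin)
  have "cos s \<le> cos z" using z assms by (intro cos_monotone_0_pi_le) auto
  then show ?thesis using z \<open>0 < s\<close> by (simp add: mult_left_mono)
qed

lemma chord_angle:
  fixes u v :: "'a::euclidean_space"
  assumes u: "norm u = 1" and v: "norm v = 1"
  shows "dist u v \<le> arccos (u \<bullet> v)"
    and "arccos (u \<bullet> v) * (1 - (dist u v)^2 / 4) \<le> dist u v"
proof -
  define th where "th = arccos (u \<bullet> v)"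
  define s where "s = th / 2"
  note uv = unit_inner_bounds[OF u v]
  have t0: "0 \<le> th" "th \<le> pi" using th_def uv arccos_lbound arccos_ubound by auto
  have s0: "0 \<le> s" "s \<le> pi/2" using t0 s_def by auto
  have c: "u \<bullet> v = 1 - 2 * (sin s)^2"
  proof -
    have "cos (2 * s) = 1 - 2 * (sin s)^2" by (rule cos_double_sin)
    moreover have "2 * s = th" using s_def by simp
    ultimately show ?thesis using th_def uv by simp
  qed
  have "(dist u v)^2 = 2 - 2 * (u \<bullet> v)"
  proof -
    have "u \<bullet> u = 1" "v \<bullet> v = 1" using u v by (simp_all add: dot_square_norm)
    then show ?thesis by (simp add: dist_norm power2_norm_eq_inner inner_diff inner_commute)
  qed
  also have "\<dots> = (2 * sin s)^2" using c by (simp add: power2_eq_square)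
  finally have "(dist u v)^2 = (2 * sin s)^2" .
  moreover have "0 \<le> sin s" using s0 by (intro sin_ge_zero) auto
  ultimately have d: "dist u v = 2 * sin s"
    using power2_eq_imp_eq[of "dist u v" "2 * sin s"] by simp
  show "dist u v \<le> arccos (u \<bullet> v)"
    using d sin_x_le_x[OF s0(1)] s_def th_def by simp
  have cs: "0 \<le> cos s" "cos s \<le> 1" using s0 by (auto intro: cos_ge_zero)
  have "(cos s)^2 \<le> cos s" using cs by (simp add: power2_eq_square mult_left_le_one_le)
  hence "s * (1 - (sin s)^2) \<le> s * cos s" using s0 by (simp add: cos_squared_eq[symmetric] mult_left_mono)
  also have "\<dots> \<le> sin s" using sin_ge_x_cos[OF s0] .
  finally have "s * (1 - (sin s)^2) \<le> sin s" .
  then show "arccos (u \<bullet> v) * (1 - (dist u v)^2 / 4) \<le> dist u v"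
    using d s_def th_def by (simp add: power2_eq_square algebra_simps)
qed

definition gsum :: "nat \<Rightarrow> (real \<Rightarrow> 'a::euclidean_space) \<Rightarrow> real" where
  "gsum N f = (\<Sum>i<N. dist (f (real i / real N)) (f (real (Suc i) / real N)))"

lemma pl_grid:
  assumes "N > 0"
  shows "ereal (gsum N g) \<le> path_length g"
proof -
  define ts where "ts = map (\<lambda>i. real i / real N) [0..<Suc N]"
  have len: "length ts = Suc N" by (simp add: ts_def)
  have nth: "ts ! i = real i / real N" if "i \<le> N" for i
    using that by (simp add: ts_def nth_map del: upt_Suc)
  have "\<forall>i j. i \<le> j \<and> j < length ts \<longrightarrow> ts ! i \<le> ts ! j"
  proof (intro allI impI)
    fix i j assume "i \<le> j \<and> j < length ts"
    then show "ts ! i \<le> ts ! j" using nth[of i] nth[of j] len by (simp add: divide_right_mono)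
  qed
  hence sorted: "sorted ts" by (simp add: sorted_iff_nth_mono)
  have sub: "set ts \<subseteq> {0..1}" using assms by (auto simp: ts_def)
  have "gsum N g = (\<Sum>i < length ts - 1. dist (g (ts ! i)) (g (ts ! Suc i)))"
    unfolding gsum_def len by (intro sum.cong) (auto simp: nth)
  then show ?thesis unfolding path_length_def
    by (intro SUP_upper2[of ts]) (use sorted sub in auto)
qed

lemma angle_sum:
  fixes c :: "real \<Rightarrow> 'a::euclidean_space"
  assumes c1: "\<And>t. t \<in> {0..1} \<Longrightarrow> norm (c t) = 1" and N: "N > 0"
  shows "k \<le> N \<Longrightarrow> arccos (c 0 \<bullet> c (real k / real N)) \<le>
     (\<Sum>i<k. arccos (c (real i / real N) \<bullet> c (real (Suc i) / real N)))"
proof (induction k)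
  case 0
  have "c 0 \<bullet> c 0 = 1" using c1[of 0] by (simp add: dot_square_norm)
  then show ?case by simp
next
  case (Suc k)
  have in01: "real j / real N \<in> {0..1}" if "j \<le> N" for j
    using that N by auto
  have "arccos (c 0 \<bullet> c (real (Suc k) / real N)) \<le> arccos (c 0 \<bullet> c (real k / real N))
        + arccos (c (real k / real N) \<bullet> c (real (Suc k) / real N))"
    by (rule arccos_tri) (use c1 in01 Suc.prems in auto)
  then show ?case using Suc by simp
qed

lemma sphere_grid:
  fixes c :: "real \<Rightarrow> 'a::euclidean_space"
  assumes cont: "continuous_on {0..1} c" and c1: "\<And>t. t \<in> {0..1} \<Longrightarrow> norm (c t) = 1"
    and e: "0 < e" "e < 1"
  shows "\<exists>N0>0. \<forall>N\<ge>N0. (1 - e) * arccos (c 0 \<bullet> c 1) \<le> gsum N c"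
proof -
  have uc: "uniformly_continuous_on {0..1} c"
    using cont compact_uniformly_continuous compact_Icc by blast
  obtain d where d: "d > 0" and dd: "\<And>x y. x \<in> {0..1} \<Longrightarrow> y \<in> {0..1} \<Longrightarrow> dist y x < d
        \<Longrightarrow> dist (c y) (c x) < sqrt e"
    using uc e unfolding uniformly_continuous_on_def by (meson real_sqrt_gt_zero)
  define N0 where "N0 = nat (ceiling (1 / d)) + 1"
  have "N0 > 0" by (simp add: N0_def)
  moreover have "(1 - e) * arccos (c 0 \<bullet> c 1) \<le> gsum N c" if "N \<ge> N0" for N
  proof -
    have N: "N > 0" using that N0_def by simp
    have "1 / d \<le> real (nat (ceiling (1 / d)))" by linarith
    hence "1 / d < real N" using that N0_def by simp
    hence Nd: "1 / real N < d" using d N by (simp add: field_simps)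
    have in01: "real j / real N \<in> {0..1}" if "j \<le> N" for j
      using that N by auto
    have step: "(1 - e) * arccos (c (real i / real N) \<bullet> c (real (Suc i) / real N))
        \<le> dist (c (real i / real N)) (c (real (Suc i) / real N))" if "i < N" for i
    proof -
      let ?u = "c (real i / real N)" and ?v = "c (real (Suc i) / real N)"
      have nu: "norm ?u = 1" "norm ?v = 1" using c1 in01 that by auto
      have "dist (real (Suc i) / real N) (real i / real N) = 1 / real N"
        using N by (simp add: dist_real_def field_simps)
      hence "dist ?v ?u < sqrt e" using dd[of "real i / real N" "real (Suc i) / real N"] in01 that Nd by simp
      hence "dist ?u ?v < sqrt e" by (simp add: dist_commute)
      hence "(dist ?u ?v)^2 < (sqrt e)^2" by (intro power_strict_mono) auto
      hence "(dist ?u ?v)^2 < e" using e by simp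
      hence X: "1 - e \<le> 1 - (dist ?u ?v)^2 / 4" using e by linarith
      have Y: "0 \<le> arccos (?u \<bullet> ?v)" using unit_inner_bounds[OF nu] arccos_lbound by blast
      have "(1 - e) * arccos (?u \<bullet> ?v) \<le> arccos (?u \<bullet> ?v) * (1 - (dist ?u ?v)^2 / 4)"
        using mult_right_mono[OF X Y] by (simp add: mult.commute)
      also have "\<dots> \<le> dist ?u ?v" by (rule chord_angle(2)[OF nu])
      finally show ?thesis .
    qed
    have "(1 - e) * arccos (c 0 \<bullet> c 1) \<le> (1 - e) * (\<Sum>i<N. arccos (c (real i / real N) \<bullet> c (real (Suc i) / real N)))"
      using angle_sum[OF c1 N order_refl] N e by (intro mult_left_mono) auto
    also have "\<dots> = (\<Sum>i<N. (1 - e) * arccos (c (real i / real N) \<bullet> c (real (Suc i) / real N)))"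
      by (simp add: sum_distrib_left)
    also have "\<dots> \<le> gsum N c" unfolding gsum_def by (intro sum_mono step) auto
    finally show ?thesis .
  qed
  ultimately show ?thesis by blast
qed

lemma cp_char:
  fixes Q :: "'a::euclidean_space set"
  assumes "convex Q" "closed Q" "p \<in> Q" "\<And>z. z \<in> Q \<Longrightarrow> (a - p) \<bullet> (z - p) \<le> 0"
  shows "closest_point Q a = p"
proof -
  have "dist a p \<le> dist a z" if "z \<in> Q" for z
  proof -
    have "(dist a z)^2 = (norm ((a - p) - (z - p)))^2" by (simp add: dist_norm)
    also have "\<dots> = (norm (a - p))^2 - 2 * ((a - p) \<bullet> (z - p)) + (norm (z - p))^2"
      by (simp add: power2_norm_eq_inner inner_diff inner_commute algebra_simps)
    also have "\<dots> \<ge> (norm (a - p))^2" using assms(4)[OF that] zero_le_power2[of "norm (z - p)"] by linarith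
    finally have "(dist a p)^2 \<le> (dist a z)^2" by (simp add: dist_norm)
    then show ?thesis by (rule power2_le_imp_le) simp
  qed
  then show ?thesis using closest_point_unique[OF assms(1-3), of a] by auto
qed
lemma cp_ray:
  fixes Q :: "'a::euclidean_space set"
  assumes "convex Q" "closed Q" "Q \<noteq> {}" "s \<ge> 0"
  shows "closest_point Q (closest_point Q x + s *\<^sub>R (x - closest_point Q x)) = closest_point Q x"
proof (rule cp_char[OF assms(1,2)])
  show "closest_point Q x \<in> Q" using assms closest_point_in_set by blast
  fix z assume "z \<in> Q"
  have "(x - closest_point Q x) \<bullet> (z - closest_point Q x) \<le> 0"
    using closest_point_dot[OF assms(1,2) \<open>z \<in> Q\<close>] .
  then show "(closest_point Q x + s *\<^sub>R (x - closest_point Q x) - closest_point Q x) \<bullet> (z - closest_point Q x) \<le> 0"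
    using assms(4) by (simp add: mult_nonneg_nonpos)
qed

lemma firm:
  fixes Q :: "'a::euclidean_space set"
  assumes "convex Q" "closed Q" "Q \<noteq> {}"
  shows "(norm (closest_point Q x - closest_point Q y))^2
     + (norm ((x - closest_point Q x) - (y - closest_point Q y)))^2 \<le> (norm (x - y))^2"
proof -
  define p where "p = closest_point Q x"
  define q where "q = closest_point Q y"
  have pq: "p \<in> Q" "q \<in> Q" using assms closest_point_in_set p_def q_def by blast+
  have 1: "(x - p) \<bullet> (q - p) \<le> 0" using closest_point_dot[OF assms(1,2) pq(2), of x] p_def by simp
  have 2: "(y - q) \<bullet> (p - q) \<le> 0" using closest_point_dot[OF assms(1,2) pq(1), of y] q_def by simp
  have e: "x - y = (p - q) + ((x - p) - (y - q))" by simp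
  have "(norm (x - y))^2 = (norm (p - q))^2 + (norm ((x - p) - (y - q)))^2
        + 2 * ((p - q) \<bullet> ((x - p) - (y - q)))"
    unfolding e by (simp add: power2_norm_eq_inner inner_add inner_commute algebra_simps)
  moreover have "(p - q) \<bullet> ((x - p) - (y - q)) = - ((x - p) \<bullet> (q - p)) - ((y - q) \<bullet> (p - q))"
    by (simp add: inner_diff inner_commute algebra_simps)
  ultimately show ?thesis using 1 2 p_def q_def by simp
qed

lemma cont_cp:
  fixes Q :: "'a::euclidean_space set"
  assumes "convex Q" "closed Q" "Q \<noteq> {}"
  shows "continuous_on S (closest_point Q)"
    "continuous_on S (\<lambda>x. dist x (closest_point Q x))"
    "continuous_on S (\<lambda>x. x - closest_point Q x)"
  using continuous_on_closest_point[OF assms]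
  by (auto intro!: continuous_intros)


lemma frontier_Qo:
  fixes Q :: "'a::euclidean_space set"
  assumes "convex Q" "closed Q" "Q \<noteq> {}"
  shows "frontier (Qo Q) = {x. dist x (closest_point Q x) = 1}"
proof -
  let ?f = "\<lambda>x. dist x (closest_point Q x)"
  have Qo: "Qo Q = {x. ?f x \<le> 1}"
    unfolding Qo_def using setdist_closest_point[OF assms(2,3)] by simp
  have cl: "closed (Qo Q)" unfolding Qo
    by (intro closed_Collect_le cont_cp[OF assms] continuous_on_const)
  have op: "open {x. ?f x < 1}"
    by (intro open_Collect_less cont_cp[OF assms] continuous_on_const)
  have "{x. ?f x < 1} \<subseteq> interior (Qo Q)"
    by (rule interior_maximal) (use op in \<open>auto simp: Qo\<close>)
  moreover have "x \<notin> interior (Qo Q)" if x: "?f x = 1" for x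
  proof
    assume "x \<in> interior (Qo Q)"
    then obtain e where e: "e > 0" "ball x e \<subseteq> Qo Q" by (meson mem_interior)
    define p where "p = closest_point Q x"
    define y where "y = p + (1 + e/2) *\<^sub>R (x - p)"
    have "closest_point Q y = p" unfolding y_def p_def by (rule cp_ray[OF assms]) (use e in auto)
    moreover have "norm (x - p) = 1" using x p_def by (simp add: dist_norm)
    ultimately have "?f y = 1 + e/2" using e by (simp add: y_def dist_norm)
    moreover have "y \<in> ball x e"
    proof -
      have "y - x = (e/2) *\<^sub>R (x - p)" by (simp add: y_def algebra_simps)
      hence "norm (y - x) = e/2" using \<open>norm (x - p) = 1\<close> e by simp
      hence "dist x y = e/2" by (simp add: dist_norm norm_minus_commute)
      then show ?thesis using e by simp
    qed
    ultimately show False using e Qo by force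
  qed
  ultimately show ?thesis
    unfolding frontier_def closure_closed[OF cl] by (force simp: Qo)
qed

lemma face_relint_exists:
  fixes S :: "'a::euclidean_space set"
  assumes "polyhedron S" "x \<in> S"
  shows "\<exists>F. F face_of S \<and> x \<in> rel_interior F"
  using assms
proof (induction "nat (aff_dim S + 1)" arbitrary: S rule: less_induct)
  case less
  show ?case
  proof (cases "x \<in> rel_interior S")
    case True
    then show ?thesis using face_of_refl polyhedron_imp_convex less.prems by blast
  next
    case False
    then have "x \<in> \<Union> {F. F facet_of S}" using rel_boundary_of_polyhedron[OF less.prems(1)] less.prems(2) by blast
    then obtain C where C: "C facet_of S" "x \<in> C" by blast
    have pC: "polyhedron C" using face_of_polyhedron_polyhedron[OF less.prems(1)] C facet_of_imp_face_of by blast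
    have "aff_dim C = aff_dim S - 1" "C \<noteq> {}" using C by (auto simp: facet_of_def)
    moreover have "aff_dim C \<ge> 0" using \<open>C \<noteq> {}\<close> aff_dim_negative_iff[of C] by linarith
    ultimately have "nat (aff_dim C + 1) < nat (aff_dim S + 1)" by simp
    from less.hyps[OF this pC C(2)] obtain F where "F face_of C" "x \<in> rel_interior F" by blast
    then show ?thesis using face_of_trans C facet_of_imp_face_of by blast
  qed
qed

locale pcone =
  fixes Q :: "'a::euclidean_space set"
  assumes poly: "polyhedron Q" and con: "cone Q" and full: "aff_dim Q = int DIM('a)"
    and apex: "{0} face_of Q"
begin

lemma convQ: "convex Q" using poly polyhedron_imp_convex by blast
lemma closedQ: "closed Q" using poly polyhedron_imp_closed by blast
lemma zeroQ: "0 \<in> Q" using apex face_of_imp_subset by blast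
lemma neQ: "Q \<noteq> {}" using zeroQ by blast

lemma not_in_hyperplane:
  assumes "n \<noteq> 0" "Q \<subseteq> {x. n \<bullet> x = 0}"
  shows False
proof -
  have "aff_dim Q \<le> aff_dim {x. n \<bullet> x = 0}" by (rule aff_dim_subset[OF assms(2)])
  then show False using assms full by simp
qed

lemma facet_normal:
  assumes "F face_of Q" "aff_dim F = int DIM('a) - 1"
  shows "\<exists>n. norm n = 1 \<and> Q \<subseteq> {x. n \<bullet> x \<le> 0} \<and> F = Q \<inter> {x. n \<bullet> x = 0}
           \<and> affine hull F = {x. n \<bullet> x = 0}"
proof -
  have Fne: "F \<noteq> {}"
  proof
    assume "F = {}"
    hence "aff_dim F = -1" by simp
    moreover have "(0::int) < int DIM('a)" using DIM_positive[where 'a='a] by linarith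
    ultimately show False using assms(2) by linarith
  qed
  have "F facet_of Q" using assms Fne full by (simp add: facet_of_def)
  then obtain a b where ab: "a \<noteq> 0" "Q \<subseteq> {x. a \<bullet> x \<le> b}" "F = Q \<inter> {x. a \<bullet> x = b}"
    using facet_of_polyhedron[OF poly] by blast
  obtain y where y: "y \<in> F" using Fne by blast
  have "y \<in> Q" "a \<bullet> y = b" using y ab by auto
  have "2 *\<^sub>R y \<in> Q" using con \<open>y \<in> Q\<close> unfolding cone_def by simp
  hence "2 * b \<le> b" using ab(2) \<open>a \<bullet> y = b\<close> by auto
  moreover have "0 \<le> b" using ab(2) zeroQ by auto
  ultimately have b0: "b = 0" by simp
  define n where "n = a /\<^sub>R norm a"
  have n1: "norm n = 1" using ab(1) by (simp add: n_def)
  have eq: "n \<bullet> x = (a \<bullet> x) / norm a" for x by (simp add: n_def divide_inverse mult.commute)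
  have le: "n \<bullet> x \<le> 0 \<longleftrightarrow> a \<bullet> x \<le> 0" for x using ab(1) by (simp add: eq divide_le_0_iff)
  have eq0: "n \<bullet> x = 0 \<longleftrightarrow> a \<bullet> x = 0" for x using ab(1) by (simp add: eq)
  have Qs: "Q \<subseteq> {x. n \<bullet> x \<le> 0}" using ab(2) b0 le by auto
  have Fe: "F = Q \<inter> {x. n \<bullet> x = 0}" using ab(3) b0 eq0 by auto
  have n0: "n \<noteq> 0" using n1 by auto
  have "affine hull F = {x. n \<bullet> x = 0}"
  proof (rule affine_dim_equal)
    show "affine (affine hull F)" by simp
    show "affine {x. n \<bullet> x = 0}" by (rule affine_hyperplane)
    show "affine hull F \<noteq> {}" using Fne by simp
    show "affine hull F \<subseteq> {x. n \<bullet> x = 0}"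
      by (rule hull_minimal) (use Fe affine_hyperplane in auto)
    show "aff_dim (affine hull F) = aff_dim {x. n \<bullet> x = 0}"
      using assms(2) n0 by simp
  qed
  then show ?thesis using n1 Qs Fe by blast
qed

lemma normal_at_relint:
  assumes n1: "norm n = 1" and Qs: "Q \<subseteq> {x. n \<bullet> x \<le> 0}" and Fe: "F = Q \<inter> {x. n \<bullet> x = 0}"
    and aff: "affine hull F = {x. n \<bullet> x = 0}"
    and p: "p \<in> rel_interior F" and v1: "norm v = 1" and vd: "\<And>q. q \<in> Q \<Longrightarrow> v \<bullet> (q - p) \<le> 0"
  shows "v = n"
proof -
  have pF: "p \<in> F" using p rel_interior_subset by blast
  hence np: "n \<bullet> p = 0" "p \<in> Q" using Fe by auto
  obtain e where e: "e > 0" "ball p e \<inter> affine hull F \<subseteq> F" using p mem_rel_interior_ball by blast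
  have perp: "v \<bullet> w = 0" if w: "n \<bullet> w = 0" for w
  proof -
    define t where "t = e / (2 * (norm w + 1))"
    have "0 < 2 * (norm w + 1)" by (simp add: add_nonneg_pos)
    hence t0: "t > 0" using e unfolding t_def by (simp only: divide_pos_pos)
    have "t * norm w < e"
    proof -
      have "t * norm w \<le> t * (norm w + 1)" using t0 by simp
      also have "\<dots> = e / 2"
      proof -
        have nz: "norm w + 1 \<noteq> 0" by (metis norm_ge_zero add_nonneg_pos zero_less_one less_irrefl)
        show ?thesis unfolding t_def using nz by (simp add: field_simps)
      qed
      finally show ?thesis using e by simp
    qed
    have ins: "p + s *\<^sub>R w \<in> F" if "\<bar>s\<bar> = t" for s
    proof -
      have "dist p (p + s *\<^sub>R w) = \<bar>s\<bar> * norm w" by (simp add: dist_norm)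
      hence "p + s *\<^sub>R w \<in> ball p e" using \<open>t * norm w < e\<close> that by simp
      moreover have "p + s *\<^sub>R w \<in> affine hull F" using aff np w by (simp add: inner_add_right)
      ultimately show ?thesis using e(2) by blast
    qed
    have in1: "p + t *\<^sub>R w \<in> F" "p + (-t) *\<^sub>R w \<in> F"
      using ins[of t] ins[of "-t"] t0 by (simp_all del: scaleR_minus_left)
    have "v \<bullet> (t *\<^sub>R w) \<le> 0" using vd[of "p + t *\<^sub>R w"] in1 Fe by auto
    moreover have "v \<bullet> ((-t) *\<^sub>R w) \<le> 0" using vd[of "p + (-t) *\<^sub>R w"] in1 Fe by auto
    ultimately have "t * (v \<bullet> w) = 0" by simp
    then show ?thesis using t0 by simp
  qed
  have nn: "n \<bullet> n = 1" using n1 by (simp add: dot_square_norm)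
  have vv: "v \<bullet> v = 1" using v1 by (simp add: dot_square_norm)
  define w where "w = v - (v \<bullet> n) *\<^sub>R n"
  have nw: "n \<bullet> w = 0" unfolding w_def by (simp add: inner_diff_right nn inner_commute)
  have vw: "v \<bullet> w = 0" using perp[OF nw] .
  have "w \<bullet> w = v \<bullet> w - (v \<bullet> n) * (n \<bullet> w)" unfolding w_def by (simp add: inner_diff_left)
  hence "w \<bullet> w = 0" using vw nw by simp
  hence w0: "w = 0" by simp
  hence vn: "v = (v \<bullet> n) *\<^sub>R n" unfolding w_def by simp
  have "v \<bullet> w = 1 - (v \<bullet> n)^2" unfolding w_def by (simp add: inner_diff_right vv power2_eq_square inner_commute)
  hence "(v \<bullet> n)^2 = 1" using vw by simp
  hence "v \<bullet> n = 1 \<or> v \<bullet> n = -1" by (simp add: power2_eq_1_iff)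
  moreover have "v \<bullet> n \<noteq> -1"
  proof
    assume "v \<bullet> n = -1"
    hence vm: "v = - n" using vn by simp
    have "Q \<subseteq> {x. n \<bullet> x = 0}"
    proof
      fix q assume "q \<in> Q"
      have "v \<bullet> (q - p) \<le> 0" using vd[OF \<open>q \<in> Q\<close>] .
      hence "n \<bullet> q \<ge> 0" using vm np by (simp add: inner_diff_right)
      moreover have "n \<bullet> q \<le> 0" using Qs \<open>q \<in> Q\<close> by auto
      ultimately show "q \<in> {x. n \<bullet> x = 0}" by simp
    qed
    moreover have "n \<noteq> 0" using n1 by auto
    ultimately show False using not_in_hyperplane by blast
  qed
  ultimately have "v \<bullet> n = 1" by blast
  then show ?thesis using vn by simp
qed

end

context pcone begin

lemma front: "frontier (Qo Q) = {x. dist x (closest_point Q x) = 1}"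
  by (rule frontier_Qo[OF convQ closedQ neQ])

lemma Gset_front: "Gset Q F \<subseteq> {x. dist x (closest_point Q x) = 1}"
proof -
  have "Gset Q F \<subseteq> closure (frontier (Qo Q))" unfolding Gset_def by (intro closure_mono) blast
  also have "\<dots> = frontier (Qo Q)" by (simp add: closure_closed)
  finally show ?thesis using front by simp
qed

lemma Rset_front: "Rset Q \<subseteq> {x. dist x (closest_point Q x) = 1}"
  unfolding Rset_def using Gset_front by blast

lemma Gset_relint:
  assumes "closest_point Q x \<in> rel_interior F" "dist x (closest_point Q x) = 1"
  shows "x \<in> Gset Q F"
  unfolding Gset_def using assms front closure_subset by fastforce

lemma pt_front:
  assumes "p \<in> Q" "norm v = 1" "\<And>q. q \<in> Q \<Longrightarrow> v \<bullet> (q - p) \<le> 0"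
  shows "closest_point Q (p + v) = p" "p + v \<in> frontier (Qo Q)"
proof -
  show c: "closest_point Q (p + v) = p" by (rule cp_char[OF convQ closedQ assms(1)]) (use assms(3) in simp)
  show "p + v \<in> frontier (Qo Q)" using c assms(2) front by (simp add: dist_norm)
qed

lemma polar_in_G0:
  assumes "norm x = 1" "\<And>q. q \<in> Q \<Longrightarrow> x \<bullet> q \<le> 0"
  shows "x \<in> Gset Q {0}"
proof -
  have "closest_point Q (0 + x) = 0" using pt_front[OF zeroQ assms(1)] assms(2) by simp
  then show ?thesis using Gset_relint[of x "{0}"] assms(1) by simp
qed

lemma Gset_facet:
  assumes n1: "norm n = 1" and Qs: "Q \<subseteq> {x. n \<bullet> x \<le> 0}" and Fe: "F = Q \<inter> {x. n \<bullet> x = 0}"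
    and aff: "affine hull F = {x. n \<bullet> x = 0}"
    and x: "x \<in> Gset Q F"
  shows "closest_point Q x \<in> F" "x - closest_point Q x = n"
proof -
  define T where "T = closest_point Q -` F \<inter> (\<lambda>x. x - closest_point Q x) -` {n}"
  have cF: "closed F" unfolding Fe by (intro closed_Int closedQ closed_hyperplane)
  have cT: "closed T" unfolding T_def
    by (intro closed_Int closed_vimage cF closed_singleton cont_cp[OF convQ closedQ neQ])
  have "(closest_point Q -` rel_interior F) \<inter> frontier (Qo Q) \<subseteq> T"
  proof
    fix y assume y: "y \<in> (closest_point Q -` rel_interior F) \<inter> frontier (Qo Q)"
    have r: "closest_point Q y \<in> rel_interior F" using y by simp
    have d: "norm (y - closest_point Q y) = 1" using y front by (simp add: dist_norm)
    have "y - closest_point Q y = n"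
      by (rule normal_at_relint[OF n1 Qs Fe aff r d]) (use closest_point_dot[OF convQ closedQ] in auto)
    then show "y \<in> T" unfolding T_def using r rel_interior_subset by auto
  qed
  hence "Gset Q F \<subseteq> T" unfolding Gset_def by (intro closure_minimal cT)
  then show "closest_point Q x \<in> F" "x - closest_point Q x = n" using x T_def by auto
qed

lemma n_in_GF:
  assumes n1: "norm n = 1" and Qs: "Q \<subseteq> {x. n \<bullet> x \<le> 0}" and Fe: "F = Q \<inter> {x. n \<bullet> x = 0}"
    and Ff: "F face_of Q"
  shows "n \<in> Gset Q F"
proof -
  have 0: "0 \<in> F" using Fe zeroQ by simp
  have sub: "(+) n ` rel_interior F \<subseteq> (closest_point Q -` rel_interior F) \<inter> frontier (Qo Q)"
  proof
    fix y assume "y \<in> (+) n ` rel_interior F"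
    then obtain p where p: "p \<in> rel_interior F" "y = n + p" by blast
    have pF: "p \<in> F" using p rel_interior_subset by blast
    have "n \<bullet> (q - p) \<le> 0" if "q \<in> Q" for q using pF Fe Qs that by (auto simp: inner_diff_right)
    then have "closest_point Q (p + n) = p" "p + n \<in> frontier (Qo Q)"
      using pt_front[of p n] pF Fe n1 by auto
    then show "y \<in> (closest_point Q -` rel_interior F) \<inter> frontier (Qo Q)" using p by (simp add: add.commute)
  qed
  have "convex F" using Ff face_of_imp_convex by blast
  hence "closure (rel_interior F) = closure F" by (rule convex_closure_rel_interior)
  hence "0 \<in> closure (rel_interior F)" using 0 closure_subset by blast
  hence "n + 0 \<in> closure ((+) n ` rel_interior F)" by (simp add: closure_translation)
  hence "n \<in> closure ((+) n ` rel_interior F)" by simp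
  then show ?thesis unfolding Gset_def using closure_mono[OF sub] by blast
qed

end

lemma lipschitz_pl:
  fixes g :: "real \<Rightarrow> 'a::euclidean_space"
  assumes L: "L \<ge> 0" and lip: "\<And>s t. s \<in> {0..1} \<Longrightarrow> t \<in> {0..1} \<Longrightarrow> dist (g s) (g t) \<le> L * \<bar>t - s\<bar>"
  shows "path_length g \<le> ereal L"
  unfolding path_length_def
proof (rule SUP_least)
  fix ts :: "real list" assume ts: "ts \<in> {ts. sorted ts \<and> set ts \<subseteq> {0..1}}"
  hence so: "sorted ts" and sub: "set ts \<subseteq> {0..1}" by auto
  show "ereal (\<Sum>i < length ts - 1. dist (g (ts ! i)) (g (ts ! Suc i))) \<le> ereal L"
  proof (cases "length ts = 0")
    case True then show ?thesis using L by simp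
  next
    case False
    define m where "m = length ts - 1"
    have m: "m < length ts" using False m_def by simp
    have inI: "ts ! i \<in> {0..1}" if "i < length ts" for i using sub that nth_mem by blast
    have "(\<Sum>i < m. dist (g (ts ! i)) (g (ts ! Suc i))) \<le> (\<Sum>i < m. L * (ts ! Suc i - ts ! i))"
    proof (rule sum_mono)
      fix i assume "i \<in> {..<m}"
      hence i: "Suc i < length ts" using m_def False by auto
      have "ts ! i \<le> ts ! Suc i" using sorted_nth_mono[OF so _ i] by simp
      then show "dist (g (ts ! i)) (g (ts ! Suc i)) \<le> L * (ts ! Suc i - ts ! i)"
        using lip[OF inI inI, of i "Suc i"] i by simp
    qed
    also have "\<dots> = L * (ts ! m - ts ! 0)"
      by (simp add: sum_distrib_left[symmetric] sum_lessThan_telescope)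
    also have "\<dots> \<le> L * 1"
      using inI[OF m] inI[of 0] False L by (intro mult_left_mono) auto
    finally show ?thesis using m_def by simp
  qed
qed

lemma minkowski:
  fixes a b :: "nat \<Rightarrow> real"
  shows "sqrt ((\<Sum>i<N. a i)^2 + (\<Sum>i<N. b i)^2) \<le> (\<Sum>i<N. sqrt ((a i)^2 + (b i)^2))"
proof (induction N)
  case 0 then show ?case by simp
next
  case (Suc N)
  let ?A = "\<Sum>i<N. a i" and ?B = "\<Sum>i<N. b i"
  have "sqrt ((?A + a N)^2 + (?B + b N)^2) = norm ((?A, ?B) + (a N, b N))" by (simp add: norm_Pair)
  also have "\<dots> \<le> norm (?A, ?B) + norm (a N, b N)" by (rule norm_triangle_ineq)
  also have "\<dots> = sqrt (?A^2 + ?B^2) + sqrt ((a N)^2 + (b N)^2)" by (simp add: norm_Pair)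
  also have "\<dots> \<le> (\<Sum>i<N. sqrt ((a i)^2 + (b i)^2)) + sqrt ((a N)^2 + (b N)^2)" using Suc by simp
  finally show ?case by simp
qed

lemma dist_chain:
  fixes f :: "real \<Rightarrow> 'a::metric_space"
  shows "dist (f 0) (f (real k / real N)) \<le> (\<Sum>i<k. dist (f (real i / real N)) (f (real (Suc i) / real N)))"
proof (induction k)
  case 0 then show ?case by simp
next
  case (Suc k)
  have "dist (f 0) (f (real (Suc k) / real N)) \<le> dist (f 0) (f (real k / real N)) + dist (f (real k / real N)) (f (real (Suc k) / real N))"
    by (rule dist_triangle)
  then show ?case using Suc by simp
qed

lemma le_from_eps:
  fixes th x :: real
  assumes "th \<ge> 0" "\<And>e. 0 < e \<Longrightarrow> e < 1 \<Longrightarrow> (1 - e) * th \<le> x"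
  shows "th \<le> x"
proof (rule ccontr)
  assume "\<not> th \<le> x"
  hence xl: "x < th" by simp
  show False
  proof (cases "x < 0")
    case True
    have "(1 - 1/2) * th \<le> x" using assms(2)[of "1/2"] by simp
    then show False using True assms(1) by simp
  next
    case False
    hence th0: "th > 0" using xl by simp
    define e where "e = (th - x) / (2 * th)"
    have e0: "0 < e" using xl th0 by (simp add: e_def)
    have e1: "e < 1" using xl th0 False by (simp add: e_def field_simps)
    have "(1 - e) * th = th - (th - x) / 2" using th0 by (simp add: e_def field_simps)
    hence "th - (th - x) / 2 \<le> x" using assms(2)[OF e0 e1] by simp
    hence "th \<le> x" by (simp add: field_simps)
    then show False using xl by simp
  qed
qed

lemma path_length_nonneg: "0 \<le> path_length g"
  unfolding path_length_def by (rule SUP_upper2[of "[]"]) auto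

lemma ereal_le_from_eps:
  assumes "th \<ge> 0" "\<And>e. 0 < e \<Longrightarrow> e < 1 \<Longrightarrow> ereal ((1 - e) * th) \<le> X" "0 \<le> X"
  shows "ereal th \<le> X"
proof (cases X)
  case (real x)
  then show ?thesis using le_from_eps[of th x] assms by simp
next
  case PInf then show ?thesis by simp
next
  case MInf then show ?thesis using assms(3) by simp
qed

lemma great_arc:
  fixes n1 n2 :: "'a::euclidean_space"
  assumes u1: "norm n1 = 1" and u2: "norm n2 = 1" and ne: "n1 \<noteq> n2" "n1 \<noteq> - n2"
  shows "\<exists>\<gamma>. path \<gamma> \<and> pathstart \<gamma> = n1 \<and> pathfinish \<gamma> = n2 \<and>
     (\<forall>t\<in>{0..1}. norm (\<gamma> t) = 1 \<and> (\<forall>q. n1 \<bullet> q \<le> 0 \<longrightarrow> n2 \<bullet> q \<le> 0 \<longrightarrow> \<gamma> t \<bullet> q \<le> 0))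
     \<and> path_length \<gamma> \<le> ereal (arccos (n1 \<bullet> n2))"
proof -
  define c where "c = n1 \<bullet> n2"
  have n11: "n1 \<bullet> n1 = 1" and n22: "n2 \<bullet> n2 = 1" using u1 u2 by (simp_all add: dot_square_norm)
  have "(norm (n1 - n2))^2 = 2 - 2 * c"
    unfolding power2_norm_eq_inner c_def by (simp add: inner_diff inner_commute n11 n22)
  moreover have "norm (n1 - n2) > 0" using ne by simp
  ultimately have c1: "c < 1" by (smt (verit) zero_less_power)
  have "(norm (n1 + n2))^2 = 2 + 2 * c"
    unfolding power2_norm_eq_inner c_def by (simp add: inner_add inner_commute n11 n22)
  moreover have "n1 + n2 \<noteq> 0" using ne(2) by (simp add: add_eq_0_iff2)
  hence "norm (n1 + n2) > 0" by simp
  ultimately have c2: "-1 < c" by (smt (verit) zero_less_power)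
  define th where "th = arccos c"
  have cth: "cos th = c" using c1 c2 th_def by simp
  have th0: "0 < th" "th < pi" using c1 c2 th_def arccos_lt_bounded by auto
  have sth: "sin th > 0" using th0 by (simp add: sin_gt_zero)
  have s2: "(sin th)^2 = 1 - c^2" using sin_squared_eq[of th] unfolding cth .
  define e where "e = (1 / sin th) *\<^sub>R (n2 - c *\<^sub>R n1)"
  have n1e: "n1 \<bullet> e = 0" unfolding e_def by (simp add: inner_diff_right n11 c_def)
  have ee: "e \<bullet> e = 1"
  proof -
    have "(n2 - c *\<^sub>R n1) \<bullet> (n2 - c *\<^sub>R n1) = 1 - c^2"
      by (simp add: inner_diff inner_commute n11 n22 c_def power2_eq_square)
    moreover have "c * c \<noteq> 1" using mult_pos_pos[OF sth sth] s2 by (simp add: power2_eq_square)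
    ultimately show ?thesis unfolding e_def using sth s2 by (simp add: power2_eq_square)
  qed
  define \<gamma> where "\<gamma> t = cos (t * th) *\<^sub>R n1 + sin (t * th) *\<^sub>R e" for t
  have dot: "\<gamma> s \<bullet> \<gamma> t = cos (s * th - t * th)" for s t
  proof -
    have en: "e \<bullet> n1 = 0" using n1e by (simp add: inner_commute)
    show ?thesis unfolding \<gamma>_def by (simp add: inner_add n11 n1e en ee cos_diff)
  qed
  have nrm: "norm (\<gamma> t) = 1" for t
  proof -
    have "(norm (\<gamma> t))^2 = 1" unfolding power2_norm_eq_inner dot by simp
    then have "norm (\<gamma> t) = 1 \<or> norm (\<gamma> t) = - 1" by (simp add: power2_eq_1_iff)
    then show ?thesis using norm_ge_zero[of "\<gamma> t"] by linarith
  qed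
  have lip: "dist (\<gamma> s) (\<gamma> t) \<le> th * \<bar>t - s\<bar>" for s t
  proof -
    have "(dist (\<gamma> s) (\<gamma> t))^2 = 2 - 2 * cos (s * th - t * th)"
      unfolding dist_norm power2_norm_eq_inner
      using dot[of s s] dot[of t t] dot[of s t] dot[of t s]
      by (simp add: inner_diff inner_commute)
    also have "\<dots> = (2 * sin ((s * th - t * th) / 2))^2"
    proof -
      define z where "z = (s * th - t * th) / 2"
      have zz: "s * th - t * th = 2 * z" unfolding z_def by simp
      have "cos (2 * z) = 1 - 2 * (sin z)^2" by (rule cos_double_sin)
      then show ?thesis unfolding zz by (simp add: z_def[symmetric] power2_eq_square)
    qed
    also have "\<dots> \<le> (2 * ((s * th - t * th) / 2))^2"
    proof -
      have "\<bar>2 * sin ((s * th - t * th) / 2)\<bar> \<le> \<bar>2 * ((s * th - t * th) / 2)\<bar>"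
        using abs_sin_x_le_abs_x[of "(s * th - t * th) / 2"] by simp
      then show ?thesis by (simp only: abs_le_square_iff[symmetric])
    qed
    also have "\<dots> = (th * \<bar>t - s\<bar>)^2"
    proof -
      have "2 * ((s * th - t * th) / 2) = th * (s - t)" by (simp add: right_diff_distrib mult.commute)
      hence "(2 * ((s * th - t * th) / 2))^2 = th^2 * (s - t)^2" by (simp add: power_mult_distrib)
      moreover have "(th * \<bar>t - s\<bar>)^2 = th^2 * (s - t)^2" by (simp add: power_mult_distrib power2_commute)
      ultimately show ?thesis by simp
    qed
    finally have "(dist (\<gamma> s) (\<gamma> t))^2 \<le> (th * \<bar>t - s\<bar>)^2" .
    moreover have "0 \<le> th * \<bar>t - s\<bar>" using th0 by simp
    ultimately show ?thesis by (rule power2_le_imp_le)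
  qed
  have pol: "\<gamma> t \<bullet> q \<le> 0" if t: "t \<in> {0..1}" and q1: "n1 \<bullet> q \<le> 0" and q2: "n2 \<bullet> q \<le> 0" for t q
  proof -
    have "\<gamma> t \<bullet> q = cos (t * th) * (n1 \<bullet> q) + sin (t * th) / sin th * (n2 \<bullet> q - c * (n1 \<bullet> q))"
      unfolding \<gamma>_def e_def by (simp add: inner_add_left inner_diff_left)
    also have "\<dots> = (sin (th - t * th) * (n1 \<bullet> q) + sin (t * th) * (n2 \<bullet> q)) / sin th"
    proof -
      have sd: "sin (th - t * th) = sin th * cos (t * th) - c * sin (t * th)" using sin_diff[of th "t * th"] cth by simp
      show ?thesis unfolding sd using sth by (simp add: field_simps)
    qed
    also have "\<dots> \<le> 0"
    proof -
      have "t * th \<le> 1 * th" "0 \<le> t * th" using t th0 by (auto intro: mult_right_mono)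
      hence tt: "t * th \<le> th" "0 \<le> t * th" by simp_all
      have a: "0 \<le> sin (th - t * th)" using tt th0 by (intro sin_ge_zero) linarith+
      have b: "0 \<le> sin (t * th)" using tt th0 by (intro sin_ge_zero) linarith+
      have "sin (th - t * th) * (n1 \<bullet> q) \<le> 0" using a q1 by (simp add: mult_nonneg_nonpos)
      moreover have "sin (t * th) * (n2 \<bullet> q) \<le> 0" using b q2 by (simp add: mult_nonneg_nonpos)
      ultimately show ?thesis using sth by (simp add: divide_nonpos_pos)
    qed
    finally show ?thesis .
  qed
  have "path \<gamma>" unfolding path_def \<gamma>_def by (intro continuous_intros)
  moreover have "pathstart \<gamma> = n1" by (simp add: pathstart_def \<gamma>_def)
  moreover have "pathfinish \<gamma> = n2"
    using sth by (simp add: pathfinish_def \<gamma>_def e_def cth)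
  moreover have "path_length \<gamma> \<le> ereal th"
    by (rule lipschitz_pl) (use th0 lip in auto)
  ultimately show ?thesis using nrm pol th_def c_def by blast
qed

context pcone begin

lemma key_ineq:
  fixes g :: "real \<Rightarrow> 'a"
  shows "sqrt ((gsum N (\<lambda>t. closest_point Q (g t)))^2 + (gsum N (\<lambda>t. g t - closest_point Q (g t)))^2)
         \<le> gsum N g"
proof -
  let ?p = "\<lambda>t. closest_point Q (g t)" and ?c = "\<lambda>t. g t - closest_point Q (g t)"
  let ?a = "\<lambda>i. dist (?p (real i / real N)) (?p (real (Suc i) / real N))"
  let ?b = "\<lambda>i. dist (?c (real i / real N)) (?c (real (Suc i) / real N))"
  have "sqrt ((gsum N ?p)^2 + (gsum N ?c)^2) = sqrt ((\<Sum>i<N. ?a i)^2 + (\<Sum>i<N. ?b i)^2)"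
    by (simp add: gsum_def)
  also have "\<dots> \<le> (\<Sum>i<N. sqrt ((?a i)^2 + (?b i)^2))" by (rule minkowski)
  also have "\<dots> \<le> gsum N g" unfolding gsum_def
  proof (rule sum_mono)
    fix i
    let ?x = "g (real i / real N)" and ?y = "g (real (Suc i) / real N)"
    have "(?a i)^2 + (?b i)^2 \<le> (dist ?x ?y)^2"
      using firm[OF convQ closedQ neQ, of ?x ?y] by (simp add: dist_norm)
    hence "sqrt ((?a i)^2 + (?b i)^2) \<le> sqrt ((dist ?x ?y)^2)" by (rule real_sqrt_le_mono)
    then show "sqrt ((?a i)^2 + (?b i)^2) \<le> dist ?x ?y" by simp
  qed
  finally show ?thesis .
qed

lemma lower_general:
  fixes g :: "real \<Rightarrow> 'a"
  assumes pg: "path g" and on: "\<And>t. t \<in> {0..1} \<Longrightarrow> dist (g t) (closest_point Q (g t)) = 1"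
  defines "c \<equiv> \<lambda>t. g t - closest_point Q (g t)"
  shows "ereal (arccos (c 0 \<bullet> c 1)) \<le> path_length g"
    and "(\<exists>t\<in>{0..1}. closest_point Q (g t) \<noteq> closest_point Q (g 0)) \<Longrightarrow> ereal (arccos (c 0 \<bullet> c 1)) < path_length g"
proof -
  define th where "th = arccos (c 0 \<bullet> c 1)"
  have cg: "continuous_on {0..1} g" using pg by (simp add: path_def)
  have pcont: "continuous_on {0..1} (\<lambda>t. closest_point Q (g t))"
    by (rule continuous_on_compose2[OF cont_cp(1)[OF convQ closedQ neQ] cg]) auto
  have ccont: "continuous_on {0..1} c" unfolding c_def by (intro continuous_intros cg pcont)
  have c1: "norm (c t) = 1" if "t \<in> {0..1}" for t using on[OF that] by (simp add: c_def dist_norm)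
  have th0: "0 \<le> th" unfolding th_def
    by (rule arccos_lbound) (use unit_inner_bounds[OF c1 c1, of 0 1] in auto)
  have grid: "\<exists>N0>0. \<forall>N\<ge>N0. (1 - e) * th \<le> gsum N c \<and> ereal (gsum N g) \<le> path_length g
               \<and> sqrt ((gsum N (\<lambda>t. closest_point Q (g t)))^2 + (gsum N c)^2) \<le> gsum N g"
    if e: "0 < e" "e < 1" for e
  proof -
    obtain N0 where N0: "N0 > 0" "\<And>N. N \<ge> N0 \<Longrightarrow> (1 - e) * th \<le> gsum N c"
      using sphere_grid[OF ccont c1 e] th_def by blast
    have "N \<ge> N0 \<Longrightarrow> (1 - e) * th \<le> gsum N c \<and> ereal (gsum N g) \<le> path_length g
               \<and> sqrt ((gsum N (\<lambda>t. closest_point Q (g t)))^2 + (gsum N c)^2) \<le> gsum N g" for N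
    proof -
      assume N: "N \<ge> N0"
      hence "N > 0" using N0 by simp
      then show ?thesis using N0(2)[OF N] pl_grid[of N g] key_ineq[of N g] unfolding c_def by auto
    qed
    then show ?thesis using N0(1) by blast
  qed
  show "ereal th \<le> path_length g"
  proof (rule ereal_le_from_eps[OF th0 _ path_length_nonneg])
    fix e :: real assume e: "0 < e" "e < 1"
    then obtain N0 where N0: "N0 > 0" "\<And>N. N \<ge> N0 \<Longrightarrow> (1 - e) * th \<le> gsum N c \<and> ereal (gsum N g) \<le> path_length g
               \<and> sqrt ((gsum N (\<lambda>t. closest_point Q (g t)))^2 + (gsum N c)^2) \<le> gsum N g"
      using grid by blast
    have 1: "(1 - e) * th \<le> gsum N0 c" and 2: "ereal (gsum N0 g) \<le> path_length g"
      and 3: "sqrt ((gsum N0 (\<lambda>t. closest_point Q (g t)))^2 + (gsum N0 c)^2) \<le> gsum N0 g"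
      using N0(2)[of N0] by auto
    have "gsum N0 c \<le> sqrt ((gsum N0 (\<lambda>t. closest_point Q (g t)))^2 + (gsum N0 c)^2)"
      by (rule real_le_rsqrt) simp
    hence "(1 - e) * th \<le> gsum N0 g" using 1 3 by linarith
    then show "ereal ((1 - e) * th) \<le> path_length g" using 2 by (metis ereal_less_eq(3) order_trans)
  qed
  assume "\<exists>t\<in>{0..1}. closest_point Q (g t) \<noteq> closest_point Q (g 0)"
  then obtain t where t: "t \<in> {0..1}" "closest_point Q (g t) \<noteq> closest_point Q (g 0)" by blast
  define p where "p = (\<lambda>t. closest_point Q (g t))"
  define a where "a = dist (p t) (p 0)"
  have a0: "a > 0" using t by (simp add: a_def p_def)
  define e where "e = min (1/2) (a^2 / (16 * (th^2 + 1)))"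
  have "0 < 16 * (th^2 + 1)" by (simp add: add_nonneg_pos)
  hence ep: "0 < a^2 / (16 * (th^2 + 1))" using a0 by (intro divide_pos_pos) auto
  have e0: "0 < e" "e < 1" using ep by (auto simp: e_def)
  obtain N1 where N1: "N1 > 0" "\<And>N. N \<ge> N1 \<Longrightarrow> (1 - e) * th \<le> gsum N c \<and> ereal (gsum N g) \<le> path_length g
               \<and> sqrt ((gsum N (\<lambda>t. closest_point Q (g t)))^2 + (gsum N c)^2) \<le> gsum N g"
    using grid[OF e0] by blast
  have pc: "continuous_on {0..1} p" using pcont by (simp add: p_def)
  obtain d where d: "d > 0" "\<And>s. s \<in> {0..1} \<Longrightarrow> dist s t < d \<Longrightarrow> dist (p s) (p t) < a / 2"
    using pc t(1) a0 unfolding continuous_on_iff by (metis half_gt_zero)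
  define N2 where "N2 = nat (ceiling (1 / d)) + 1"
  define N where "N = max N1 N2"
  have NN: "N \<ge> N1" "N \<ge> N2" "N > 0" using N1 by (auto simp: N_def)
  have "1 / d \<le> real (nat (ceiling (1 / d)))" by linarith
  hence "1 / d < real N" using NN N2_def by simp
  hence Nd: "1 / real N < d" using d NN by (simp add: field_simps)
  define k where "k = nat (floor (t * real N))"
  have tN: "0 \<le> t * real N" "t * real N \<le> real N" using t(1) NN by (auto simp: mult_left_le_one_le)
  have k1: "real k \<le> t * real N" "t * real N < real k + 1" using tN by (auto simp: k_def)
  have kN: "k \<le> N" using k1 tN by linarith
  have kk: "real k / real N \<in> {0..1}" using kN NN by auto
  have "dist (real k / real N) t < d"
  proof -
    have "real k / real N \<le> t" using k1 NN by (simp add: field_simps)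
    moreover have "t < real k / real N + 1 / real N" using k1 NN by (simp add: field_simps)
    ultimately have "dist (real k / real N) t < 1 / real N" by (simp add: dist_real_def)
    then show ?thesis using Nd by simp
  qed
  hence "dist (p (real k / real N)) (p t) < a / 2" using d kk by blast
  moreover have "a \<le> dist (p 0) (p (real k / real N)) + dist (p (real k / real N)) (p t)"
    unfolding a_def by (metis dist_commute dist_triangle)
  ultimately have A: "a / 2 \<le> dist (p 0) (p (real k / real N))" by linarith
  also have "\<dots> \<le> (\<Sum>i<k. dist (p (real i / real N)) (p (real (Suc i) / real N)))" by (rule dist_chain)
  also have "\<dots> \<le> gsum N p" unfolding gsum_def using kN by (intro sum_mono2) auto
  finally have PA: "a / 2 \<le> gsum N p" .
  have 1: "(1 - e) * th \<le> gsum N c" and 2: "ereal (gsum N g) \<le> path_length g"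
    and 3: "sqrt ((gsum N p)^2 + (gsum N c)^2) \<le> gsum N g"
    using N1(2)[OF NN(1)] by (auto simp: p_def)
  have e2: "2 * e * th^2 \<le> a^2 / 8"
  proof -
    have "e \<le> a^2 / (16 * (th^2 + 1))" by (simp add: e_def)
    hence "2 * e * th^2 \<le> 2 * (a^2 / (16 * (th^2 + 1))) * th^2"
      by (intro mult_right_mono mult_left_mono) auto
    also have "\<dots> = (a^2 / 8) * (th^2 / (th^2 + 1))"
    proof -
      have "th^2 + 1 > 0" by (simp add: add_nonneg_pos)
      hence hz: "th^2 + 1 \<noteq> 0" by linarith
      show ?thesis using hz by (simp add: field_simps)
    qed
    also have "\<dots> \<le> (a^2 / 8) * 1"
    proof (intro mult_left_mono)
      have "th^2 + 1 > 0" by (simp add: add_nonneg_pos)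
      then show "th^2 / (th^2 + 1) \<le> 1" by (simp add: divide_le_eq)
    qed simp
    finally show ?thesis by simp
  qed
  have U: "((1 - e) * th)^2 \<le> (gsum N c)^2"
    using 1 e0 th0 by (intro power_mono) auto
  have P: "(a / 2)^2 \<le> (gsum N p)^2" using PA a0 by (intro power_mono) auto
  have "((1 - e) * th)^2 = th^2 - 2 * e * th^2 + e^2 * th^2" by (simp add: power2_eq_square algebra_simps)
  hence "((1 - e) * th)^2 \<ge> th^2 - a^2 / 8" using e2 by (smt (verit) zero_le_power2 mult_nonneg_nonneg)
  moreover have "a^2 > 0" using a0 by simp
  moreover have "(a / 2)^2 = a^2 / 4" by (simp add: power_divide)
  ultimately have "th^2 < (gsum N p)^2 + (gsum N c)^2" using U P by linarith
  hence "th < sqrt ((gsum N p)^2 + (gsum N c)^2)" by (rule real_less_rsqrt)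
  hence "th < gsum N g" using 3 by linarith
  hence "ereal th < ereal (gsum N g)" by simp
  then show "ereal th < path_length g" using 2 by (rule less_le_trans)
qed

end

context pcone begin

lemma main:
  assumes f1: "F1 face_of Q" "aff_dim F1 = int DIM('a) - 1"
    and f2: "F2 face_of Q" "aff_dim F2 = int DIM('a) - 1"
    and bne: "bdry_comp Q F1 \<noteq> bdry_comp Q F2"
  shows "(\<forall>g. shortest_path_in (Rset Q) (bdry_comp Q F1) (bdry_comp Q F2) g \<longrightarrow>
            (\<exists>F. F face_of Q \<and> aff_dim F \<noteq> int DIM('a) - 1 \<and> path_image g \<subseteq> Gset Q F))
         \<and> intrinsic_setdist (Rset Q) (bdry_comp Q F1) (bdry_comp Q F2)
           = ereal (sphere_setdist (bdry_comp Q F1 \<inter> sphere 0 1) (bdry_comp Q F2 \<inter> sphere 0 1))"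
proof -
  have F12: "F1 \<noteq> F2" using bne by blast
  obtain n1 where n1: "norm n1 = 1" "Q \<subseteq> {x. n1 \<bullet> x \<le> 0}" "F1 = Q \<inter> {x. n1 \<bullet> x = 0}"
      "affine hull F1 = {x. n1 \<bullet> x = 0}"
    using facet_normal[OF f1] by blast
  obtain n2 where n2: "norm n2 = 1" "Q \<subseteq> {x. n2 \<bullet> x \<le> 0}" "F2 = Q \<inter> {x. n2 \<bullet> x = 0}"
      "affine hull F2 = {x. n2 \<bullet> x = 0}"
    using facet_normal[OF f2] by blast
  have nn1: "n1 \<noteq> n2" using F12 n1(3) n2(3) by blast
  have nn2: "n1 \<noteq> - n2"
  proof
    assume e: "n1 = - n2"
    have "Q \<subseteq> {x. n1 \<bullet> x = 0}" using n1(2) n2(2) e by force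
    moreover have "n1 \<noteq> 0" using n1(1) by auto
    ultimately show False using not_in_hyperplane by blast
  qed
  have dim: "DIM('a) \<noteq> 1"
  proof
    assume D: "DIM('a) = 1"
    have "0 \<in> F1" "0 \<in> F2" using n1(3) n2(3) zeroQ by auto
    moreover have "aff_dim F1 = 0" "aff_dim F2 = 0" using f1(2) f2(2) D by auto
    ultimately have "F1 = {0}" "F2 = {0}"
    proof -
      have "\<exists>a. F1 = {a}" using aff_dim_eq_0[of F1] \<open>aff_dim F1 = 0\<close> by simp
      then obtain a1 where "F1 = {a1}" by blast
      have "\<exists>a. F2 = {a}" using aff_dim_eq_0[of F2] \<open>aff_dim F2 = 0\<close> by simp
      then obtain a2 where "F2 = {a2}" by blast
      show "F1 = {0}" "F2 = {0}" using \<open>F1 = {a1}\<close> \<open>F2 = {a2}\<close> \<open>0 \<in> F1\<close> \<open>0 \<in> F2\<close> by auto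
    qed
    then show False using F12 by simp
  qed
  have G0R: "Gset Q {0} \<subseteq> Rset Q"
  proof -
    have "aff_dim ({0}::'a set) \<noteq> int DIM('a) - 1" using dim by simp
    show ?thesis
    proof
      fix x assume x: "x \<in> Gset Q {0}"
      show "x \<in> Rset Q" unfolding Rset_def
        by (rule UnionI[of "Gset Q {0}"]) (use x apex \<open>aff_dim ({0}::'a set) \<noteq> int DIM('a) - 1\<close> in auto)
    qed
  qed
  have polar: "x \<in> Rset Q" if "norm x = 1" "\<And>q. q \<in> Q \<Longrightarrow> x \<bullet> q \<le> 0" for x
    using polar_in_G0[OF that] G0R by blast
  have nB1: "n1 \<in> bdry_comp Q F1"
    unfolding bdry_comp_def using n_in_GF[OF n1(1-3) f1(1)] polar[OF n1(1)] n1(2) by blast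
  have nB2: "n2 \<in> bdry_comp Q F2"
    unfolding bdry_comp_def using n_in_GF[OF n2(1-3) f2(1)] polar[OF n2(1)] n2(2) by blast
  have Bsph: "bdry_comp Q F \<inter> sphere 0 1 = {n}"
    if n: "norm n = 1" "Q \<subseteq> {x. n \<bullet> x \<le> 0}" "F = Q \<inter> {x. n \<bullet> x = 0}" "affine hull F = {x. n \<bullet> x = 0}"
      and nB: "n \<in> bdry_comp Q F" for F n
  proof
    show "{n} \<subseteq> bdry_comp Q F \<inter> sphere 0 1" using nB n(1) by simp
    show "bdry_comp Q F \<inter> sphere 0 1 \<subseteq> {n}"
    proof
      fix x assume x: "x \<in> bdry_comp Q F \<inter> sphere 0 1"
      hence xG: "x \<in> Gset Q F" and xn: "norm x = 1" by (auto simp: bdry_comp_def)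
      define p where "p = closest_point Q x"
      have pF: "p \<in> F" and xp: "x - p = n" using Gset_facet[OF n xG] p_def by auto
      have np: "n \<bullet> p = 0" using pF n(3) by auto
      have nn: "n \<bullet> n = 1" using n(1) by (simp add: dot_square_norm)
      have "x = p + n" using xp by (simp add: algebra_simps)
      hence "x \<bullet> x = p \<bullet> p + 1" using np nn by (simp add: inner_add inner_commute)
      moreover have "x \<bullet> x = 1" using xn by (simp add: dot_square_norm)
      ultimately have "p \<bullet> p = 0" by simp
      hence "p = 0" by simp
      then show "x \<in> {n}" using \<open>x = p + n\<close> by simp
    qed
  qed
  define th where "th = arccos (n1 \<bullet> n2)"
  have sd: "sphere_setdist (bdry_comp Q F1 \<inter> sphere 0 1) (bdry_comp Q F2 \<inter> sphere 0 1) = th"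
  proof -
    have "{arccos (x \<bullet> y) |x y. x \<in> {n1} \<and> y \<in> {n2}} = {th}" by (auto simp: th_def)
    then show ?thesis unfolding sphere_setdist_def Bsph[OF n1 nB1] Bsph[OF n2 nB2] by simp
  qed
  have low: "ereal th \<le> path_length g"
    and strict: "(\<exists>t\<in>{0..1}. closest_point Q (g t) \<noteq> closest_point Q (g 0)) \<Longrightarrow> ereal th < path_length g"
    if g: "path g" "path_image g \<subseteq> Rset Q" "pathstart g \<in> bdry_comp Q F1" "pathfinish g \<in> bdry_comp Q F2" for g
  proof -
    have on: "dist (g t) (closest_point Q (g t)) = 1" if "t \<in> {0..1}" for t
      using g(2) Rset_front that unfolding path_image_def by blast
    have "g 0 \<in> Gset Q F1" "g 1 \<in> Gset Q F2" using g(3,4) by (auto simp: bdry_comp_def pathstart_def pathfinish_def)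
    hence c0: "g 0 - closest_point Q (g 0) = n1" and c1: "g 1 - closest_point Q (g 1) = n2"
      using Gset_facet[OF n1] Gset_facet[OF n2] by auto
    show "ereal th \<le> path_length g" using lower_general(1)[OF g(1) on] c0 c1 th_def by simp
    show "(\<exists>t\<in>{0..1}. closest_point Q (g t) \<noteq> closest_point Q (g 0)) \<Longrightarrow> ereal th < path_length g"
      using lower_general(2)[OF g(1) on] c0 c1 th_def by simp
  qed
  obtain \<gamma> where ga: "path \<gamma>" "pathstart \<gamma> = n1" "pathfinish \<gamma> = n2"
     "\<And>t. t \<in> {0..1} \<Longrightarrow> norm (\<gamma> t) = 1 \<and> (\<forall>q. n1 \<bullet> q \<le> 0 \<longrightarrow> n2 \<bullet> q \<le> 0 \<longrightarrow> \<gamma> t \<bullet> q \<le> 0)"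
     "path_length \<gamma> \<le> ereal th"
    using great_arc[OF n1(1) n2(1) nn1 nn2] th_def by blast
  have gaR: "path_image \<gamma> \<subseteq> Rset Q"
  proof
    fix x assume "x \<in> path_image \<gamma>"
    then obtain t where t: "t \<in> {0..1}" "x = \<gamma> t" unfolding path_image_def by blast
    show "x \<in> Rset Q" using ga(4)[OF t(1)] n1(2) n2(2) t(2) by (intro polar) auto
  qed
  have isd: "intrinsic_setdist (Rset Q) (bdry_comp Q F1) (bdry_comp Q F2) = ereal th"
  proof (rule antisym)
    show "intrinsic_setdist (Rset Q) (bdry_comp Q F1) (bdry_comp Q F2) \<le> ereal th"
      unfolding intrinsic_setdist_def
      by (rule INF_lower2[of \<gamma>]) (use ga gaR nB1 nB2 in auto)
    show "ereal th \<le> intrinsic_setdist (Rset Q) (bdry_comp Q F1) (bdry_comp Q F2)"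
      unfolding intrinsic_setdist_def by (rule INF_greatest) (use low in auto)
  qed
  have first: "\<exists>F. F face_of Q \<and> aff_dim F \<noteq> int DIM('a) - 1 \<and> path_image g \<subseteq> Gset Q F"
    if sp: "shortest_path_in (Rset Q) (bdry_comp Q F1) (bdry_comp Q F2) g" for g
  proof -
    have g: "path g" "path_image g \<subseteq> Rset Q" "pathstart g \<in> bdry_comp Q F1" "pathfinish g \<in> bdry_comp Q F2"
      and pl: "path_length g = ereal th"
      using sp isd unfolding shortest_path_in_def by auto
    define p where "p = closest_point Q (g 0)"
    have const: "closest_point Q (g t) = p" if t: "t \<in> {0..1}" for t
    proof (rule ccontr)
      assume "closest_point Q (g t) \<noteq> p"
      hence "\<exists>t\<in>{0..1}. closest_point Q (g t) \<noteq> closest_point Q (g 0)" using t p_def by blast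
      hence "ereal th < path_length g" by (rule strict[OF g])
      then show False using pl by simp
    qed
    have pQ: "p \<in> Q" using p_def closest_point_in_set[OF closedQ neQ] by blast
    obtain F where F: "F face_of Q" "p \<in> rel_interior F" using face_relint_exists[OF poly pQ] by blast
    have on: "dist (g t) (closest_point Q (g t)) = 1" if "t \<in> {0..1}" for t
      using g(2) Rset_front that unfolding path_image_def by blast
    have sub: "path_image g \<subseteq> Gset Q F"
    proof
      fix x assume "x \<in> path_image g"
      then obtain t where t: "t \<in> {0..1}" "x = g t" unfolding path_image_def by blast
      show "x \<in> Gset Q F" using Gset_relint[of x F] const[OF t(1)] on[OF t(1)] F(2) t(2) by simp
    qed
    have "g 0 \<in> Gset Q F1" "g 1 \<in> Gset Q F2" using g(3,4) by (auto simp: bdry_comp_def pathstart_def pathfinish_def)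
    hence "closest_point Q (g 0) \<in> F1" "closest_point Q (g 1) \<in> F2"
      using Gset_facet(1)[OF n1] Gset_facet(1)[OF n2] by blast+
    moreover have "closest_point Q (g 1) = p" using const[of 1] by simp
    ultimately have pF1: "p \<in> F1" and pF2: "p \<in> F2" using p_def by auto
    have "aff_dim F \<noteq> int DIM('a) - 1"
    proof
      assume adF: "aff_dim F = int DIM('a) - 1"
      have FQ: "F \<subseteq> Q" using F(1) face_of_imp_subset by blast
      have eq: "F = Fi" if fi: "Fi face_of Q" "aff_dim Fi = int DIM('a) - 1" "p \<in> Fi" for Fi
      proof (rule ccontr)
        assume ne: "F \<noteq> Fi"
        have "Fi \<inter> rel_interior F \<noteq> {}" using fi(3) F(2) by blast
        hence "F \<subseteq> Fi" by (rule subset_of_face_of[OF fi(1) FQ])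
        hence "F face_of Fi" by (rule face_of_subset[OF F(1) _ face_of_imp_subset[OF fi(1)]])
        hence "aff_dim F < aff_dim Fi" by (rule face_of_aff_dim_lt[OF face_of_imp_convex[OF fi(1)] _ ne])
        then show False using adF fi(2) by simp
      qed
      have "F = F1" by (rule eq[OF f1 pF1])
      moreover have "F = F2" by (rule eq[OF f2 pF2])
      ultimately show False using F12 by simp
    qed
    then show ?thesis using F(1) sub by blast
  qed
  show ?thesis using first isd sd by simp
qed

end

theorem mainTheorem7:
  fixes Q :: "'a::euclidean_space set"
    and F1 F2 :: "'a set"
  assumes "polyhedron Q" and "cone Q" and "aff_dim Q = int DIM('a)"
    and "{0} face_of Q"
    and "F1 face_of Q" and "aff_dim F1 = int DIM('a) - 1"
    and "F2 face_of Q" and "aff_dim F2 = int DIM('a) - 1"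
    and "bdry_comp Q F1 \<noteq> bdry_comp Q F2"
  shows "(\<forall>g. shortest_path_in (Rset Q) (bdry_comp Q F1) (bdry_comp Q F2) g \<longrightarrow>
            (\<exists>F. F face_of Q \<and> aff_dim F \<noteq> int DIM('a) - 1 \<and> path_image g \<subseteq> Gset Q F))
         \<and> intrinsic_setdist (Rset Q) (bdry_comp Q F1) (bdry_comp Q F2)
           = ereal (sphere_setdist (bdry_comp Q F1 \<inter> sphere 0 1) (bdry_comp Q F2 \<inter> sphere 0 1))"
proof -
  interpret pcone Q using assms(1-4) by unfold_locales
  show ?thesis by (rule main[OF assms(5-9)])
qed

end
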